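(* Let $k\ge0$. If $k=0$, assume $\nabla_x f$ exists and $\|\nabla_x f(x',y')-\nabla_x f(x,y)\|\le\lambda\|x'-x\|+\mu\|y'-y\|$ for all $x,x'\in X,y,y'\in Y$ (possibly with $\lambda=\infty$). Assume $\nabla^k_{y\cdots y}f$ exists on $X\times Y$ and $\|\nabla^k_{y\cdots y}f(x',y')-\nabla^k_{y\cdots y}f(x,y)\|\le\rho_k\|y'-y\|+\sigma_k\|x'-x\|$ for all $x,x',y,y'$ (possibly with $\rho_k=\infty$), and that $\nabla^k_{y\cdots y}f(\cdot,y)$ is absolutely continuous for all $y\in Y$. Then for every $\hat y\in Y$, $x\in X$, $y\in Y$, $$\|\nabla_x f(x,y)-\nabla_x\hat f_k(x,y)\|\le\begin{cases}\min\{\mu\mathsf D,2\sigma_0\}&\text{for }k=0,\\[2pt] \dfrac{2\sigma_k\mathsf D^k}{k!}&\text{for }k\ge1.\end{cases}$$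
   Context: Let $E_x,E_y$ be finite-dimensional Euclidean spaces with Euclidean norms; for tensors $\|\cdot\|$ is the induced operator norm. Let $X\subseteq E_x$, $Y\subseteq E_y$ be convex with nonempty interior, $Y$ compact, $\mathsf D\ge\mathrm{diam}(Y)$, $f:X\times Y\to\mathbb R$. $\nabla^j_{y\cdots y}f$ denotes the tensor of $j$-th order partial derivatives in $y$. For $\hat y\in Y$, $\hat f_k(x,y)=\sum_{j=0}^k\frac1{j!}\nabla^j_{y\cdots y}f(x,\hat y)[(y-\hat y)^j]$, with $T[v^j]=T[v,\dots,v]$, and $\nabla_x\hat f_k$ its gradient in $x$. *)

theory Defs
  imports "HOL-Analysis.Analysis"
begin

text \<open>A j-linear form (tensor) on 'b is represented as a function on lists of
  vectors of length j.  Its operator norm:\<close>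
definition tensor_norm :: "nat \<Rightarrow> ('b::real_normed_vector list \<Rightarrow> real) \<Rightarrow> real" where
  "tensor_norm j T = Sup {\<bar>T vs\<bar> | vs. length vs = j \<and> (\<forall>v\<in>set vs. norm v \<le> 1)}"

definition ypartials_upto ::
  "nat \<Rightarrow> ('a \<Rightarrow> 'b::real_normed_vector \<Rightarrow> real) \<Rightarrow> (nat \<Rightarrow> 'a \<Rightarrow> 'b \<Rightarrow> 'b list \<Rightarrow> real)
    \<Rightarrow> 'a set \<Rightarrow> 'b set \<Rightarrow> bool" where
  "ypartials_upto k f D X Y \<longleftrightarrow>
     (\<forall>x\<in>X. \<forall>y\<in>Y. D 0 x y [] = f x y) \<and>
     (\<forall>j<k. \<forall>x\<in>X. \<forall>y\<in>Y. \<forall>vs. length vs = j \<longrightarrow>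
        ((\<lambda>y'. D j x y' vs) has_derivative (\<lambda>v. D (Suc j) x y (v # vs))) (at y within Y))"

definition taylor_y :: "nat \<Rightarrow> (nat \<Rightarrow> 'a \<Rightarrow> 'b::real_normed_vector \<Rightarrow> 'b list \<Rightarrow> real)
    \<Rightarrow> 'b \<Rightarrow> 'a \<Rightarrow> 'b \<Rightarrow> real" where
  "taylor_y k D yh x y = (\<Sum>j\<le>k. D j x yh (replicate j (y - yh)) / fact j)"

definition has_gradient_within :: "('a::real_inner \<Rightarrow> real) \<Rightarrow> 'a \<Rightarrow> 'a \<Rightarrow> 'a set \<Rightarrow> bool" where
  "has_gradient_within g G x S \<longleftrightarrow> (g has_derivative (\<lambda>h. G \<bullet> h)) (at x within S)"

definition abs_continuous_on :: "real set \<Rightarrow> (real \<Rightarrow> 'c::real_normed_vector) \<Rightarrow> bool" where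
  "abs_continuous_on S g \<longleftrightarrow>
    (\<forall>e>0. \<exists>d>0. \<forall>n (a::nat\<Rightarrow>real) b.
        (\<forall>i<n. a i \<le> b i \<and> a i \<in> S \<and> b i \<in> S \<and> {a i..b i} \<subseteq> S) \<and>
        (\<forall>i<n. \<forall>j<n. i \<noteq> j \<longrightarrow> b i \<le> a j \<or> b j \<le> a i) \<and>
        (\<Sum>i<n. b i - a i) < d
        \<longrightarrow> (\<Sum>i<n. norm (g (b i) - g (a i))) < e)"

text \<open>Absolute continuity of a function on a convex subset of a Euclidean space:
  absolutely continuous along every segment in X.\<close>
definition abs_continuous_segments :: "'a::real_normed_vector set \<Rightarrow> ('a \<Rightarrow> 'c::real_normed_vector) \<Rightarrow> bool" where
  "abs_continuous_segments X g \<longleftrightarrow>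
    (\<forall>a\<in>X. \<forall>b\<in>X. abs_continuous_on {0..1} (\<lambda>t. g (a + t *\<^sub>R (b - a))))"

end

theory Submission
  imports Defs
begin


definition mlin :: "nat \<Rightarrow> ('b::real_vector list \<Rightarrow> real) \<Rightarrow> bool" where
  "mlin j T \<longleftrightarrow> (\<forall>vs1 vs2 v w (a::real) b. length vs1 + length vs2 + 1 = j \<longrightarrow>
     T (vs1 @ (a *\<^sub>R v + b *\<^sub>R w) # vs2) = a * T (vs1 @ v # vs2) + b * T (vs1 @ w # vs2))"

lemma mlin_slot0:
  assumes "mlin (Suc j) T" "length vs = j"
  shows "T ((a *\<^sub>R v + b *\<^sub>R w) # vs) = a * T (v # vs) + b * T (w # vs)"
  using assms unfolding mlin_def by (metis append_Nil list.size(3) add.commute add_0 plus_1_eq_Suc)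

lemma mlin_tail:
  fixes T :: "'b::real_vector list \<Rightarrow> real"
  assumes "mlin (Suc j) T"
  shows "mlin j (\<lambda>vs. T (z # vs))"
  unfolding mlin_def
proof (intro allI impI)
  fix vs1 vs2 :: "'b list" and v w :: 'b and a b :: real
  assume "length vs1 + length vs2 + 1 = j"
  then have "length (z # vs1) + length vs2 + 1 = Suc j" by simp
  then show "T (z # vs1 @ (a *\<^sub>R v + b *\<^sub>R w) # vs2) = a * T (z # vs1 @ v # vs2) + b * T (z # vs1 @ w # vs2)"
    using assms unfolding mlin_def by (metis append_Cons)
qed

lemma mlin_diff:
  assumes "mlin j T" "mlin j S"
  shows "mlin j (\<lambda>vs. T vs - S vs)"
  using assms unfolding mlin_def by (simp add: algebra_simps)

lemma mlin_sum:
  assumes "mlin (Suc j) T" "length vs = j" "finite B"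
  shows "T ((\<Sum>b\<in>B. c b *\<^sub>R b) # vs) = (\<Sum>b\<in>B. c b * T (b # vs))"
  using assms(3)
proof (induction B rule: finite_induct)
  case empty
  have "T (((0::real) *\<^sub>R 0 + (0::real) *\<^sub>R 0) # vs) = 0 * T (0 # vs) + 0 * T (0 # vs)"
    by (rule mlin_slot0[OF assms(1,2)])
  then show ?case by simp
next
  case (insert x F)
  have "T ((c x *\<^sub>R x + 1 *\<^sub>R (\<Sum>b\<in>F. c b *\<^sub>R b)) # vs) = c x * T (x # vs) + 1 * T ((\<Sum>b\<in>F. c b *\<^sub>R b) # vs)"
    by (rule mlin_slot0[OF assms(1,2)])
  then show ?case using insert by simp
qed

lemma mlin_hom:
  assumes "mlin j T" "length vs = j"
  shows "T (map ((*\<^sub>R) c) vs) = c ^ j * T vs"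
  using assms
proof (induction j arbitrary: T vs)
  case 0
  then show ?case by simp
next
  case (Suc j)
  then obtain v vs' where vs: "vs = v # vs'" "length vs' = j" by (cases vs) auto
  have "T ((c *\<^sub>R v + 0 *\<^sub>R v) # map ((*\<^sub>R) c) vs') = c * T (v # map ((*\<^sub>R) c) vs') + 0 * T (v # map ((*\<^sub>R) c) vs')"
    by (rule mlin_slot0[OF Suc.prems(1)]) (simp add: vs)
  moreover have "T (v # map ((*\<^sub>R) c) vs') = c ^ j * T (v # vs')"
    using Suc.IH[OF mlin_tail[OF Suc.prems(1)] vs(2)] .
  ultimately show ?case by (simp add: vs)
qed

lemma mlin_bdd:
  fixes T :: "'b::euclidean_space list \<Rightarrow> real"
  assumes "mlin j T"
  shows "\<exists>C. \<forall>vs. length vs = j \<and> (\<forall>v\<in>set vs. norm v \<le> 1) \<longrightarrow> \<bar>T vs\<bar> \<le> C"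
  using assms
proof (induction j arbitrary: T)
  case 0
  then show ?case by (intro exI[of _ "\<bar>T []\<bar>"]) auto
next
  case (Suc j)
  have "\<forall>b\<in>Basis. \<exists>C. \<forall>vs. length vs = j \<and> (\<forall>v\<in>set vs. norm v \<le> 1) \<longrightarrow> \<bar>T (b # vs)\<bar> \<le> C"
    using Suc.IH[OF mlin_tail[OF Suc.prems]] by blast
  then obtain C where C: "\<And>b vs. b \<in> Basis \<Longrightarrow> length vs = j \<Longrightarrow> (\<forall>v\<in>set vs. norm v \<le> 1) \<Longrightarrow> \<bar>T (b # vs)\<bar> \<le> C b"
    by metis
  show ?case
  proof (intro exI[of _ "\<Sum>b\<in>Basis. C b"] allI impI)
    fix vs :: "'b list"
    assume vs: "length vs = Suc j \<and> (\<forall>v\<in>set vs. norm v \<le> 1)"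
    then obtain v vs' where vv: "vs = v # vs'" "length vs' = j" by (cases vs) auto
    have nv: "norm v \<le> 1" and nvs: "\<forall>v\<in>set vs'. norm v \<le> 1" using vs vv by auto
    have "T vs = T ((\<Sum>b\<in>Basis. (v \<bullet> b) *\<^sub>R b) # vs')" by (simp add: vv euclidean_representation)
    also have "\<dots> = (\<Sum>b\<in>Basis. (v \<bullet> b) * T (b # vs'))"
      by (rule mlin_sum[OF Suc.prems vv(2)]) simp
    finally have "\<bar>T vs\<bar> \<le> (\<Sum>b\<in>Basis. \<bar>(v \<bullet> b) * T (b # vs')\<bar>)"
      by (simp add: sum_abs)
    also have "\<dots> \<le> (\<Sum>b\<in>Basis. C b)"
    proof (rule sum_mono)
      fix b :: 'b assume b: "b \<in> Basis"
      have "\<bar>v \<bullet> b\<bar> \<le> 1" using Basis_le_norm[OF b, of v] nv by linarith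
      moreover have "\<bar>T (b # vs')\<bar> \<le> C b" using C[OF b vv(2) nvs] .
      ultimately show "\<bar>(v \<bullet> b) * T (b # vs')\<bar> \<le> C b"
        by (simp add: abs_mult) (metis abs_ge_zero dual_order.trans mult_left_le_one_le)
    qed
    finally show "\<bar>T vs\<bar> \<le> (\<Sum>b\<in>Basis. C b)" .
  qed
qed

lemma tensor_bound:
  fixes T :: "'b::euclidean_space list \<Rightarrow> real"
  assumes "mlin k T"
  shows "\<bar>T (replicate k u)\<bar> \<le> tensor_norm k T * norm u ^ k" and "0 \<le> tensor_norm k T"
proof -
  let ?S = "{\<bar>T vs\<bar> | vs. length vs = k \<and> (\<forall>v\<in>set vs. norm v \<le> 1)}"
  obtain C where C: "\<And>vs. length vs = k \<Longrightarrow> (\<forall>v\<in>set vs. norm v \<le> 1) \<Longrightarrow> \<bar>T vs\<bar> \<le> C"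
    using mlin_bdd[OF assms] by blast
  have bdd: "bdd_above ?S" using C by (auto intro!: bdd_aboveI[of _ C])
  have up: "\<bar>T vs\<bar> \<le> tensor_norm k T" if "length vs = k" "\<forall>v\<in>set vs. norm v \<le> 1" for vs
    unfolding tensor_norm_def by (rule cSup_upper[OF _ bdd]) (use that in blast)
  have "\<bar>T (replicate k 0)\<bar> \<le> tensor_norm k T" by (rule up) auto
  then show "0 \<le> tensor_norm k T" by linarith
  define w where "w = u /\<^sub>R norm u"
  have nw: "norm w \<le> 1" by (cases "u = 0") (simp_all add: w_def)
  have uw: "u = norm u *\<^sub>R w" by (cases "u = 0") (simp_all add: w_def)
  have "T (replicate k u) = T (map ((*\<^sub>R) (norm u)) (replicate k w))"
    by (subst uw) (simp add: map_replicate)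
  also have "\<dots> = norm u ^ k * T (replicate k w)" by (rule mlin_hom[OF assms]) simp
  finally have "\<bar>T (replicate k u)\<bar> = norm u ^ k * \<bar>T (replicate k w)\<bar>" by (simp add: abs_mult)
  also have "\<dots> \<le> norm u ^ k * tensor_norm k T"
    by (rule mult_left_mono) (use up[of "replicate k w"] nw in auto)
  finally show "\<bar>T (replicate k u)\<bar> \<le> tensor_norm k T * norm u ^ k" by (simp add: mult.commute)
qed



lemma deriv_bound_pair:
  fixes g :: "'a::euclidean_space \<Rightarrow> real"
  assumes S: "convex S" "x \<in> S" "a \<in> S" "b \<in> S"
    and d: "(g has_derivative L) (at x within S)"
    and lip: "\<And>a b. a \<in> S \<Longrightarrow> b \<in> S \<Longrightarrow> \<bar>g a - g b\<bar> \<le> C * norm (a - b)"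
  shows "\<bar>L (a - b)\<bar> \<le> C * norm (a - b)"
proof -
  have lin: "linear L" using d by (rule has_derivative_linear)
  define pa where "pa = (\<lambda>t::real. x + t *\<^sub>R (a - x))"
  define pb where "pb = (\<lambda>t::real. x + t *\<^sub>R (b - x))"
  have inS: "pa t \<in> S" "pb t \<in> S" if "t \<in> {0..1}" for t
  proof -
    have "pa t = (1 - t) *\<^sub>R x + t *\<^sub>R a" by (simp add: pa_def algebra_simps)
    then show "pa t \<in> S" using that S by (auto intro: convexD)
    have "pb t = (1 - t) *\<^sub>R x + t *\<^sub>R b" by (simp add: pb_def algebra_simps)
    then show "pb t \<in> S" using that S by (auto intro: convexD)
  qed
  have dpa: "(pa has_derivative (\<lambda>s. s *\<^sub>R (a - x))) (at 0 within {0..1})"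
    unfolding pa_def by (auto intro!: derivative_eq_intros)
  have dpb: "(pb has_derivative (\<lambda>s. s *\<^sub>R (b - x))) (at 0 within {0..1})"
    unfolding pb_def by (auto intro!: derivative_eq_intros)
  have sa: "pa ` {0..1} \<subseteq> S" and sb: "pb ` {0..1} \<subseteq> S" using inS by auto
  have p0: "pa 0 = x" "pb 0 = x" by (simp_all add: pa_def pb_def)
  have ga: "(g has_derivative L) (at (pa 0) within pa ` {0..1})"
    unfolding p0 by (rule has_derivative_subset[OF d sa])
  have gb: "(g has_derivative L) (at (pb 0) within pb ` {0..1})"
    unfolding p0 by (rule has_derivative_subset[OF d sb])
  have "((\<lambda>t. g (pa t) - g (pb t)) has_derivative (\<lambda>s. L (s *\<^sub>R (a - x)) - L (s *\<^sub>R (b - x)))) (at 0 within {0..1})"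
    using has_derivative_diff[OF diff_chain_within[OF dpa ga] diff_chain_within[OF dpb gb]]
    by (simp add: o_def)
  moreover have "(\<lambda>s. L (s *\<^sub>R (a - x)) - L (s *\<^sub>R (b - x))) = (\<lambda>s. L (a - b) * s)"
    using lin by (auto simp: linear_cmul linear_diff algebra_simps)
  ultimately have "((\<lambda>t. g (pa t) - g (pb t)) has_field_derivative L (a - b)) (at 0 within {0..1})"
    by (simp add: has_field_derivative_def)
  then have lim: "((\<lambda>t. (g (pa t) - g (pb t) - (g (pa 0) - g (pb 0))) / (t - 0)) \<longlongrightarrow> L (a - b)) (at 0 within {0..1})"
    by (simp add: has_field_derivative_iff)
  have "((\<lambda>t. \<bar>(g (pa t) - g (pb t) - (g (pa 0) - g (pb 0))) / (t - 0)\<bar>) \<longlongrightarrow> \<bar>L (a - b)\<bar>) (at 0 within {0..1})"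
    by (rule tendsto_rabs[OF lim])
  moreover have "eventually (\<lambda>t. \<bar>(g (pa t) - g (pb t) - (g (pa 0) - g (pb 0))) / (t - 0)\<bar> \<le> C * norm (a - b)) (at 0 within {0..1})"
    unfolding eventually_at_filter
  proof (rule always_eventually, intro allI impI)
    fix t :: real assume t: "t \<noteq> 0" "t \<in> {0..1}"
    have "\<bar>g (pa t) - g (pb t)\<bar> \<le> C * norm (pa t - pb t)" using lip inS t by blast
    also have "pa t - pb t = t *\<^sub>R (a - b)" by (simp add: pa_def pb_def algebra_simps)
    finally have "\<bar>g (pa t) - g (pb t)\<bar> \<le> C * norm (a - b) * t" using t by (simp add: mult_ac)
    moreover have "pa 0 = pb 0" by (simp add: pa_def pb_def)
    moreover have "t > 0" using t by simp
    ultimately have "\<bar>g (pa t) - g (pb t)\<bar> / t \<le> C * norm (a - b)"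
      by (simp add: divide_le_eq)
    then show "\<bar>(g (pa t) - g (pb t) - (g (pa 0) - g (pb 0))) / (t - 0)\<bar> \<le> C * norm (a - b)"
      using \<open>pa 0 = pb 0\<close> \<open>t > 0\<close> by (simp only: diff_self diff_zero abs_divide abs_of_pos)
  qed
  moreover have "at (0::real) within {0..1} \<noteq> bot"
    by (simp add: at_within_Icc_at_right)
  ultimately show ?thesis by (rule tendsto_upperbound)
qed

lemma deriv_bound:
  fixes g :: "'a::euclidean_space \<Rightarrow> real"
  assumes S: "convex S" "interior S \<noteq> {}" "x \<in> S"
    and d: "(g has_derivative L) (at x within S)"
    and lip: "\<And>a b. a \<in> S \<Longrightarrow> b \<in> S \<Longrightarrow> \<bar>g a - g b\<bar> \<le> C * norm (a - b)"
  shows "\<bar>L v\<bar> \<le> C * norm v"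
proof (cases "v = 0")
  case True
  have "linear L" using d by (rule has_derivative_linear)
  then have "L v = 0" using True by (simp add: linear_0)
  moreover have "0 \<le> C * norm v" using True by simp
  ultimately show ?thesis by simp
next
  case False
  have lin: "linear L" using d by (rule has_derivative_linear)
  obtain c where c: "c \<in> interior S" using S by blast
  then obtain r where r: "r > 0" "ball c r \<subseteq> S" by (meson mem_interior)
  define e where "e = r / (2 * norm v)"
  have e: "e > 0" using r False by (simp add: e_def)
  have "dist c (c + e *\<^sub>R v) < r" using r False by (simp add: dist_norm e_def)
  then have a: "c + e *\<^sub>R v \<in> S" using r by auto
  have cS: "c \<in> S" using r by auto
  have "\<bar>L ((c + e *\<^sub>R v) - c)\<bar> \<le> C * norm ((c + e *\<^sub>R v) - c)"
    by (rule deriv_bound_pair[OF S(1) S(3) a cS d lip])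
  then have "e * \<bar>L v\<bar> \<le> e * (C * norm v)" using e lin by (simp add: linear_cmul abs_mult)
  then show ?thesis using e by simp
qed

lemma grad_bound:
  fixes g :: "'a::euclidean_space \<Rightarrow> real"
  assumes S: "convex S" "interior S \<noteq> {}" "x \<in> S"
    and d: "has_gradient_within g G x S"
    and lip: "\<And>a b. a \<in> S \<Longrightarrow> b \<in> S \<Longrightarrow> \<bar>g a - g b\<bar> \<le> C * norm (a - b)"
  shows "norm G \<le> C"
proof -
  have "\<bar>G \<bullet> G\<bar> \<le> C * norm G"
    using deriv_bound[OF S d[unfolded has_gradient_within_def] lip] .
  then have "norm G * norm G \<le> C * norm G" by (simp add: power2_eq_square[symmetric] power2_norm_eq_inner)
  moreover have "0 \<le> C"
  proof -
    obtain c where c: "c \<in> interior S" using S by blast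
    then obtain r where r: "r > 0" "ball c r \<subseteq> S" by (meson mem_interior)
    obtain u :: 'a where u: "u \<in> Basis" using nonempty_Basis by blast
    have "dist c (c + (r/2) *\<^sub>R u) < r" using r u by (simp add: dist_norm)
    then have cc: "c + (r/2) *\<^sub>R u \<in> S" "c \<in> S" using r by auto
    have nn: "norm ((c + (r/2) *\<^sub>R u) - c) = r/2" using r u by simp
    from lip[OF cc] nn have "0 \<le> C * (r/2)" by (metis abs_ge_zero order_trans)
    then show ?thesis using r by (simp add: zero_le_mult_iff)
  qed
  ultimately show ?thesis
  proof (cases "G = 0")
    case False
    then have "0 < norm G" by simp
    with \<open>norm G * norm G \<le> C * norm G\<close> show ?thesis by (rule mult_right_le_imp_le)
  qed simp
qed

lemma deriv_unique:
  fixes f :: "'a::euclidean_space \<Rightarrow> real"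
  assumes S: "convex S" "interior S \<noteq> {}" "x \<in> S"
    and d1: "(f has_derivative L1) (at x within S)" and d2: "(f has_derivative L2) (at x within S)"
  shows "L1 v = L2 v"
proof -
  have "((\<lambda>y. f y - f y) has_derivative (\<lambda>v. L1 v - L2 v)) (at x within S)"
    by (rule has_derivative_diff[OF d1 d2])
  from deriv_bound[OF S this, of 0 v] show ?thesis by simp
qed



lemma D_mlin:
  fixes D :: "nat \<Rightarrow> 'a \<Rightarrow> 'b::euclidean_space \<Rightarrow> 'b list \<Rightarrow> real"
  assumes hY: "convex Y" "interior Y \<noteq> {}" and yp: "ypartials_upto k f D X Y"
  shows "j \<le> k \<Longrightarrow> x \<in> X \<Longrightarrow> y \<in> Y \<Longrightarrow> mlin j (D j x y)"
proof (induction j arbitrary: y)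
  case 0
  then show ?case by (simp add: mlin_def)
next
  case (Suc j)
  have der: "((\<lambda>y'. D j x y' vs) has_derivative (\<lambda>v. D (Suc j) x y0 (v # vs))) (at y0 within Y)"
    if "y0 \<in> Y" "length vs = j" for y0 vs
    using yp Suc.prems that unfolding ypartials_upto_def by auto
  show ?case unfolding mlin_def
  proof (intro allI impI)
    fix vs1 vs2 :: "'b list" and v w :: 'b and a b :: real
    assume len: "length vs1 + length vs2 + 1 = Suc j"
    show "D (Suc j) x y (vs1 @ (a *\<^sub>R v + b *\<^sub>R w) # vs2) =
          a * D (Suc j) x y (vs1 @ v # vs2) + b * D (Suc j) x y (vs1 @ w # vs2)"
    proof (cases vs1)
      case Nil
      then have "length vs2 = j" using len by simp
      then have lin: "linear (\<lambda>v. D (Suc j) x y (v # vs2))"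
        using der[OF Suc.prems(3)] has_derivative_linear by blast
      show ?thesis using Nil linear_add[OF lin, of "a *\<^sub>R v" "b *\<^sub>R w"] linear_cmul[OF lin, of a v]
          linear_cmul[OF lin, of b w] by simp
    next
      case (Cons z vs1')
      have l: "length (vs1' @ (a *\<^sub>R v + b *\<^sub>R w) # vs2) = j" "length (vs1' @ v # vs2) = j"
        "length (vs1' @ w # vs2) = j" using len Cons by auto
      have d1: "((\<lambda>y'. D j x y' (vs1' @ (a *\<^sub>R v + b *\<^sub>R w) # vs2)) has_derivative
          (\<lambda>z. D (Suc j) x y (z # vs1' @ (a *\<^sub>R v + b *\<^sub>R w) # vs2))) (at y within Y)"
        by (rule der[OF Suc.prems(3) l(1)])
      have d2: "((\<lambda>y'. a * D j x y' (vs1' @ v # vs2) + b * D j x y' (vs1' @ w # vs2)) has_derivative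
          (\<lambda>z. a * D (Suc j) x y (z # vs1' @ v # vs2) + b * D (Suc j) x y (z # vs1' @ w # vs2))) (at y within Y)"
        by (intro has_derivative_add has_derivative_mult_right der[OF Suc.prems(3)] l)
      have eq: "a * D j x y' (vs1' @ v # vs2) + b * D j x y' (vs1' @ w # vs2) = D j x y' (vs1' @ (a *\<^sub>R v + b *\<^sub>R w) # vs2)"
        if "y' \<in> Y" for y'
      proof -
        have "mlin j (D j x y')" using Suc.IH[of y'] Suc.prems that by simp
        moreover have lj: "length vs1' + length vs2 + 1 = j" using len Cons by simp
        ultimately show ?thesis unfolding mlin_def by (auto dest: spec[of _ vs1'] spec[of _ vs2])
      qed
      have d3: "((\<lambda>y'. D j x y' (vs1' @ (a *\<^sub>R v + b *\<^sub>R w) # vs2)) has_derivative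
          (\<lambda>z. a * D (Suc j) x y (z # vs1' @ v # vs2) + b * D (Suc j) x y (z # vs1' @ w # vs2))) (at y within Y)"
        by (rule has_derivative_transform[OF Suc.prems(3) _ d2]) (simp add: eq)
      from deriv_unique[OF hY Suc.prems(3) d1 d3, of z] show ?thesis using Cons by simp
    qed
  qed
qed

lemma poly_deriv:
  "((\<lambda>t::real. c * t ^ Suc n / fact (Suc n)) has_vector_derivative c * t ^ n / fact n) (at t within S)"
proof -
  have "((\<lambda>t::real. t ^ Suc n) has_real_derivative real (Suc n) * t ^ n) (at t within S)"
    using DERIV_pow[of "Suc n" t S] by simp
  from DERIV_cdivide[OF DERIV_cmult[OF this, of c], of "fact (Suc n)"]
  have "((\<lambda>t::real. c * t ^ Suc n / fact (Suc n)) has_real_derivative c * (real (Suc n) * t ^ n) / fact (Suc n)) (at t within S)" .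
  moreover have "c * (real (Suc n) * t ^ n) / fact (Suc n) = c * t ^ n / fact n"
  proof -
    have "c * (real (Suc n) * t ^ n) / fact (Suc n) = (real (Suc n) * (c * t ^ n)) / (real (Suc n) * fact n)"
      by (simp only: fact_Suc mult.left_commute)
    also have "\<dots> = c * t ^ n / fact n"
      by (rule nonzero_mult_divide_mult_cancel_left) simp
    finally show ?thesis .
  qed
  ultimately show ?thesis by (simp add: has_real_derivative_iff_has_vector_derivative)
qed

lemma seg_deriv:
  fixes D :: "nat \<Rightarrow> 'a \<Rightarrow> 'b::euclidean_space \<Rightarrow> 'b list \<Rightarrow> real"
  assumes hY: "convex Y" "interior Y \<noteq> {}" and yp: "ypartials_upto k f D X Y"
    and x: "x \<in> X" and yh: "yh \<in> Y" and y: "y \<in> Y" and m: "m < k" and t: "t \<in> {0..1}"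
  shows "((\<lambda>t. D m x (yh + t *\<^sub>R (y - yh)) (replicate m (y - yh))) has_vector_derivative
           D (Suc m) x (yh + t *\<^sub>R (y - yh)) (replicate (Suc m) (y - yh))) (at t within {0..1})"
proof -
  let ?u = "y - yh"
  have inY: "yh + s *\<^sub>R ?u \<in> Y" if "s \<in> {0..1}" for s
  proof -
    have "yh + s *\<^sub>R ?u = (1 - s) *\<^sub>R yh + s *\<^sub>R y" by (simp add: algebra_simps)
    then show ?thesis using that hY yh y by (auto intro: convexD)
  qed
  have der: "((\<lambda>y'. D m x y' (replicate m ?u)) has_derivative (\<lambda>v. D (Suc m) x y0 (v # replicate m ?u))) (at y0 within Y)"
    if "y0 \<in> Y" for y0
    using yp m x that unfolding ypartials_upto_def by auto
  have dl: "((\<lambda>s. yh + s *\<^sub>R ?u) has_derivative (\<lambda>s. s *\<^sub>R ?u)) (at t within {0..1})"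
    by (auto intro!: derivative_eq_intros)
  have d1: "((\<lambda>s. D m x (yh + s *\<^sub>R ?u) (replicate m ?u)) has_derivative
      (\<lambda>s. D (Suc m) x (yh + t *\<^sub>R ?u) ((s *\<^sub>R ?u) # replicate m ?u))) (at t within {0..1})"
    by (rule has_derivative_in_compose2[OF der _ t dl]) (use inY in auto)
  have "linear (\<lambda>v. D (Suc m) x (yh + t *\<^sub>R ?u) (v # replicate m ?u))"
    using der[OF inY[OF t]] has_derivative_linear by blast
  then have eq: "(\<lambda>s. D (Suc m) x (yh + t *\<^sub>R ?u) ((s *\<^sub>R ?u) # replicate m ?u)) =
     (\<lambda>s. s *\<^sub>R D (Suc m) x (yh + t *\<^sub>R ?u) (?u # replicate m ?u))"
    by (intro ext) (rule linear_cmul)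
  from d1[unfolded eq] show ?thesis by (simp only: has_vector_derivative_def replicate_Suc)
qed



lemma lip_R:
  fixes f :: "'a::euclidean_space \<Rightarrow> 'b::euclidean_space \<Rightarrow> real"
    and D :: "nat \<Rightarrow> 'a \<Rightarrow> 'b \<Rightarrow> 'b list \<Rightarrow> real" and rho :: ereal
  assumes hY: "convex Y" "interior Y \<noteq> {}" and yp: "ypartials_upto k f D X Y"
    and tn: "\<forall>x\<in>X. \<forall>x'\<in>X. \<forall>y\<in>Y. \<forall>y'\<in>Y.
           ereal (tensor_norm k (\<lambda>vs. D k x' y' vs - D k x y vs))
             \<le> rho * ereal (norm (y' - y)) + ereal (\<sigma> * norm (x' - x))"
    and x1: "x1 \<in> X" and x2: "x2 \<in> X" and yh: "yh \<in> Y" and y: "y \<in> Y"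
  shows "\<bar>(f x1 y - taylor_y k D yh x1 y) - (f x2 y - taylor_y k D yh x2 y)\<bar>
           \<le> (2 * \<sigma> * norm (y - yh) ^ k / fact k) * norm (x1 - x2)"
proof -
  define u where "u = y - yh"
  define yt where "yt = (\<lambda>t::real. yh + t *\<^sub>R u)"
  have ytY: "yt t \<in> Y" if "t \<in> {0..1}" for t
  proof -
    have "yt t = (1 - t) *\<^sub>R yh + t *\<^sub>R y" by (simp add: yt_def u_def algebra_simps)
    then show ?thesis using that hY yh y by (auto intro: convexD)
  qed
  define qd where "qd = (\<lambda>m t. D m x1 (yt t) (replicate m u) - D m x2 (yt t) (replicate m u))"
  define M where "M = \<sigma> * norm (x1 - x2) * norm u ^ k"
  have qk: "\<bar>qd k t\<bar> \<le> M" if t: "t \<in> {0..1}" for t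
  proof -
    let ?T = "\<lambda>vs. D k x1 (yt t) vs - D k x2 (yt t) vs"
    have ml: "mlin k ?T"
      by (rule mlin_diff; rule D_mlin[OF hY yp]) (use x1 x2 ytY[OF t] in auto)
    have "ereal (tensor_norm k ?T) \<le> rho * ereal (norm (yt t - yt t)) + ereal (\<sigma> * norm (x1 - x2))"
      using tn x1 x2 ytY[OF t] by blast
    then have tnb: "tensor_norm k ?T \<le> \<sigma> * norm (x1 - x2)" by (simp add: zero_ereal_def[symmetric])
    have "\<bar>?T (replicate k u)\<bar> \<le> tensor_norm k ?T * norm u ^ k" by (rule tensor_bound(1)[OF ml])
    also have "\<dots> \<le> \<sigma> * norm (x1 - x2) * norm u ^ k" by (rule mult_right_mono[OF tnb]) simp
    finally show ?thesis by (simp add: qd_def M_def)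
  qed
  have f1: "f x1 y = D 0 x1 y []" and f2: "f x2 y = D 0 x2 y []"
    using yp x1 x2 y unfolding ypartials_upto_def by auto
  have yt1: "yt 1 = y" and yt0: "yt 0 = yh" by (simp_all add: yt_def u_def)
  have diffeq: "(f x1 y - taylor_y k D yh x1 y) - (f x2 y - taylor_y k D yh x2 y) = qd 0 1 - (\<Sum>j\<le>k. qd j 0 / fact j)"
    unfolding taylor_y_def qd_def f1 f2 yt1 yt0 u_def[symmetric]
    by (simp add: sum_subtractf diff_divide_distrib)
  have main: "\<bar>qd 0 1 - (\<Sum>j\<le>k. qd j 0 / fact j)\<bar> \<le> 2 * M / fact k"
  proof (cases "k = 0")
    case True
    have "\<bar>qd 0 1\<bar> \<le> M" "\<bar>qd 0 0\<bar> \<le> M" using qk[of 1] qk[of 0] True by auto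
    then show ?thesis using True by simp
  next
    case False
    define c where "c = qd k 0"
    define Df where "Df = (\<lambda>m t. qd m t - c * t ^ (k - m) / fact (k - m))"
    define P where "P = (\<lambda>m (t::real). t ^ (k - m) / fact (k - m))"
    have ksub: "k - m = Suc (k - Suc m)" if "m < k" for m using that by simp
    have dqd: "((\<lambda>t. qd m t) has_vector_derivative qd (Suc m) t) (at t within {0..1})"
      if "m < k" "0 \<le> t" "t \<le> 1" for m t
      unfolding qd_def yt_def u_def
      by (intro has_vector_derivative_diff seg_deriv[OF hY yp]) (use that x1 x2 yh y in auto)
    have dP: "((\<lambda>t. c * t ^ (k - m) / fact (k - m)) has_vector_derivative c * t ^ (k - Suc m) / fact (k - Suc m)) (at t within {0..1})"
      if "m < k" for m t c
      unfolding ksub[OF that] by (rule poly_deriv)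
    have dDf: "(Df m has_vector_derivative Df (Suc m) t) (at t within {0..1})"
      if "m < k" "0 \<le> t" "t \<le> 1" for m t
      unfolding Df_def using has_vector_derivative_diff[OF dqd[OF that] dP[OF that(1), of c t]] by simp
    have dPP: "(P m has_vector_derivative P (Suc m) t) (at t within {0..1})"
      if "m < k" "0 \<le> t" "t \<le> 1" for m t
      unfolding P_def using dP[OF that(1), of 1 t] by simp
    have kpos: "k > 0" using False by simp
    have I: "((\<lambda>x. ((1 - x) ^ (k - 1) / fact (k - 1)) *\<^sub>R Df k x) has_integral
              Df 0 1 - (\<Sum>i<k. ((1 - 0) ^ i / fact i) *\<^sub>R Df i 0)) {0..1}"
      by (rule Taylor_has_integral[where f="Df 0" and Df=Df and p=k and a=0 and b=1, OF kpos refl dDf]) auto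
    have IP: "((\<lambda>x. ((1 - x) ^ (k - 1) / fact (k - 1)) *\<^sub>R P k x) has_integral
              P 0 1 - (\<Sum>i<k. ((1 - 0) ^ i / fact i) *\<^sub>R P i 0)) {0..1}"
      by (rule Taylor_has_integral[where f="P 0" and Df=P and p=k and a=0 and b=1, OF kpos refl dPP]) auto
    have P0: "P i 0 = 0" if "i < k" for i using that by (simp add: P_def)
    have Df0: "Df i 0 = qd i 0" if "i < k" for i using that by (simp add: Df_def)
    have IP': "((\<lambda>x. (1 - x) ^ (k - 1) / fact (k - 1) * (2 * M)) has_integral 1 / fact k * (2 * M)) {0..1}"
    proof -
      have "(\<Sum>i<k. ((1 - 0) ^ i / fact i) *\<^sub>R P i 0) = 0" by (rule sum.neutral) (simp add: P0)
      with IP have "((\<lambda>x. ((1 - x) ^ (k - 1) / fact (k - 1)) *\<^sub>R P k x) has_integral P 0 1) {0..1}" by simp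
      from has_integral_mult_left[OF this, of "2 * M"] show ?thesis by (simp add: P_def)
    qed
    have val: "Df 0 1 - (\<Sum>i<k. ((1 - 0) ^ i / fact i) *\<^sub>R Df i 0) = qd 0 1 - (\<Sum>j\<le>k. qd j 0 / fact j)"
    proof -
      have "(\<Sum>i<k. ((1 - 0) ^ i / fact i) *\<^sub>R Df i 0) = (\<Sum>i<k. qd i 0 / fact i)"
        by (rule sum.cong) (simp_all add: Df0)
      moreover have "(\<Sum>j\<le>k. qd j 0 / fact j) = (\<Sum>i<k. qd i 0 / fact i) + c / fact k"
        by (simp add: lessThan_Suc_atMost[symmetric] c_def)
      moreover have "Df 0 1 = qd 0 1 - c / fact k" by (simp add: Df_def)
      ultimately show ?thesis by simp
    qed
    have bnd: "\<bar>((1 - x) ^ (k - 1) / fact (k - 1)) *\<^sub>R Df k x\<bar> \<le> (1 - x) ^ (k - 1) / fact (k - 1) * (2 * M)"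
      if "x \<in> {0..1}" for x
    proof -
      have "\<bar>Df k x\<bar> \<le> 2 * M"
        using qk[OF that] qk[of 0] by (simp add: Df_def c_def)
      moreover have a0: "0 \<le> (1 - x) ^ (k - 1) / fact (k - 1)" using that by simp
      ultimately have "(1 - x) ^ (k - 1) / fact (k - 1) * \<bar>Df k x\<bar> \<le> (1 - x) ^ (k - 1) / fact (k - 1) * (2 * M)"
        by (rule mult_left_mono)
      moreover have "\<bar>((1 - x) ^ (k - 1) / fact (k - 1)) *\<^sub>R Df k x\<bar> = (1 - x) ^ (k - 1) / fact (k - 1) * \<bar>Df k x\<bar>"
        using a0 by (simp only: real_scaleR_def abs_mult abs_of_nonneg)
      ultimately show ?thesis by linarith
    qed
    have le1: "qd 0 1 - (\<Sum>j\<le>k. qd j 0 / fact j) \<le> 1 / fact k * (2 * M)"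
      by (rule has_integral_le[OF I[unfolded val] IP']) (metis bnd abs_le_D1)
    have le2: "- (qd 0 1 - (\<Sum>j\<le>k. qd j 0 / fact j)) \<le> 1 / fact k * (2 * M)"
      by (rule has_integral_le[OF has_integral_neg[OF I[unfolded val]] IP']) (metis bnd abs_le_D2)
    show ?thesis using le1 le2 by simp
  qed
  show ?thesis using main unfolding diffeq M_def u_def by (simp add: field_simps)
qed

lemma grad_unique:
  fixes g :: "'a::euclidean_space \<Rightarrow> real"
  assumes S: "convex S" "interior S \<noteq> {}" "x \<in> S"
    and d1: "has_gradient_within g G1 x S" and d2: "has_gradient_within g G2 x S"
  shows "G1 = G2"
proof -
  have "G1 \<bullet> (G1 - G2) = G2 \<bullet> (G1 - G2)"
    by (rule deriv_unique[OF S d1[unfolded has_gradient_within_def] d2[unfolded has_gradient_within_def]])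
  then have "(G1 - G2) \<bullet> (G1 - G2) = 0" by (simp add: inner_diff_left)
  then show ?thesis by simp
qed

theorem lemma2:
  fixes f :: "'a::euclidean_space \<Rightarrow> 'b::euclidean_space \<Rightarrow> real"
    and X :: "'a set" and Y :: "'b set"
    and D :: "nat \<Rightarrow> 'a \<Rightarrow> 'b \<Rightarrow> 'b list \<Rightarrow> real"
    and gf :: "'a \<Rightarrow> 'b \<Rightarrow> 'a"
    and k :: nat and DD \<mu> \<sigma> :: real and lam rho :: ereal
  assumes "convex X" "interior X \<noteq> {}" "convex Y" "interior Y \<noteq> {}" "compact Y"
    and "diameter Y \<le> DD"
    and "k = 0 \<Longrightarrow> (\<forall>x\<in>X. \<forall>y\<in>Y. has_gradient_within (\<lambda>x'. f x' y) (gf x y) x X) \<and>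
           (\<forall>x\<in>X. \<forall>x'\<in>X. \<forall>y\<in>Y. \<forall>y'\<in>Y.
              ereal (norm (gf x' y' - gf x y)) \<le> lam * ereal (norm (x' - x)) + ereal (\<mu> * norm (y' - y)))"
    and "ypartials_upto k f D X Y"
    and "\<forall>x\<in>X. \<forall>x'\<in>X. \<forall>y\<in>Y. \<forall>y'\<in>Y.
           ereal (tensor_norm k (\<lambda>vs. D k x' y' vs - D k x y vs))
             \<le> rho * ereal (norm (y' - y)) + ereal (\<sigma> * norm (x' - x))"
    and "\<forall>y\<in>Y. \<forall>vs. length vs = k \<longrightarrow> abs_continuous_segments X (\<lambda>x. D k x y vs)"
  shows "\<forall>yh\<in>Y. \<forall>x\<in>X. \<forall>y\<in>Y. \<forall>G1 G2.
           has_gradient_within (\<lambda>x'. f x' y) G1 x X \<and>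
           has_gradient_within (\<lambda>x'. taylor_y k D yh x' y) G2 x X \<longrightarrow>
           norm (G1 - G2) \<le> (if k = 0 then min (\<mu> * DD) (2 * \<sigma>) else 2 * \<sigma> * DD ^ k / fact k)"
proof (intro ballI allI impI)
  note hX = assms(1,2) and hY = assms(3,4) and yp = assms(8) and tn = assms(9)
  fix yh x y G1 G2
  assume yh: "yh \<in> Y" and x: "x \<in> X" and y: "y \<in> Y"
    and G: "has_gradient_within (\<lambda>x'. f x' y) G1 x X \<and> has_gradient_within (\<lambda>x'. taylor_y k D yh x' y) G2 x X"
  define g where "g = (\<lambda>x'. f x' y - taylor_y k D yh x' y)"
  define L where "L = 2 * \<sigma> * norm (y - yh) ^ k / fact k"
  have eqf: "(\<lambda>h. G1 \<bullet> h - G2 \<bullet> h) = (\<bullet>) (G1 - G2)" by (rule ext) (simp add: inner_diff_left)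
  have dg: "has_gradient_within g (G1 - G2) x X"
    using has_derivative_diff[OF G[THEN conjunct1, unfolded has_gradient_within_def]
        G[THEN conjunct2, unfolded has_gradient_within_def]]
    unfolding has_gradient_within_def g_def by (simp only: eqf)
  have lipg: "\<bar>g a - g b\<bar> \<le> L * norm (a - b)" if "a \<in> X" "b \<in> X" for a b
    unfolding g_def L_def by (rule lip_R[OF hY yp tn that yh y])
  have nG: "norm (G1 - G2) \<le> L" by (rule grad_bound[OF hX x dg lipg])
  obtain c where c: "c \<in> interior X" using hX by blast
  then obtain r where r: "r > 0" "ball c r \<subseteq> X" by (meson mem_interior)
  obtain e :: 'a where e: "e \<in> Basis" using nonempty_Basis by blast
  have "dist c (c + (r/2) *\<^sub>R e) < r" using r e by (simp add: dist_norm)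
  then have cc: "c + (r/2) *\<^sub>R e \<in> X" "c \<in> X" using r by auto
  have sig: "0 \<le> \<sigma>"
  proof -
    let ?T = "\<lambda>vs. D k (c + (r/2) *\<^sub>R e) yh vs - D k c yh vs"
    have ml: "mlin k ?T"
      by (rule mlin_diff; rule D_mlin[OF hY yp]) (use cc yh in auto)
    have "ereal (tensor_norm k ?T) \<le> rho * ereal (norm (yh - yh)) + ereal (\<sigma> * norm ((c + (r/2) *\<^sub>R e) - c))"
      using tn cc yh by blast
    then have "tensor_norm k ?T \<le> \<sigma> * (r / 2)" using r e by (simp add: zero_ereal_def[symmetric])
    with tensor_bound(2)[OF ml] have "0 \<le> \<sigma> * (r / 2)" by linarith
    then show ?thesis using r by (simp add: zero_le_mult_iff)
  qed
  have ndiam: "norm (y - yh) \<le> DD"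
  proof -
    have "dist y yh \<le> diameter Y"
      by (rule diameter_bounded_bound[OF compact_imp_bounded[OF assms(5)] y yh])
    then show ?thesis using assms(6) by (simp add: dist_norm)
  qed
  have LD: "L \<le> 2 * \<sigma> * DD ^ k / fact k"
    unfolding L_def
    by (intro divide_right_mono mult_left_mono power_mono ndiam) (use sig in auto)
  show "norm (G1 - G2) \<le> (if k = 0 then min (\<mu> * DD) (2 * \<sigma>) else 2 * \<sigma> * DD ^ k / fact k)"
  proof (cases "k = 0")
    case False
    then show ?thesis using nG LD by simp
  next
    case True
    note k0 = assms(7)[OF True]
    have g1: "G1 = gf x y"
      by (rule grad_unique[OF hX x G[THEN conjunct1]]) (use k0 x y in blast)
    have "has_gradient_within (\<lambda>x'. f x' yh) G2 x X"
      unfolding has_gradient_within_def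
    proof (rule has_derivative_transform[OF x _ G[THEN conjunct2, unfolded has_gradient_within_def]])
      fix x' assume "x' \<in> X"
      then show "f x' yh = taylor_y k D yh x' y"
        using yp yh True unfolding ypartials_upto_def taylor_y_def by simp
    qed
    then have g2: "G2 = gf x yh"
      by (rule grad_unique[OF hX x]) (use k0 x yh in blast)
    have "ereal (norm (gf x y - gf x yh)) \<le> lam * ereal (norm (x - x)) + ereal (\<mu> * norm (y - yh))"
      using k0 x y yh by blast
    then have nmu: "norm (G1 - G2) \<le> \<mu> * norm (y - yh)"
      using g1 g2 by (simp add: zero_ereal_def[symmetric])
    obtain y0 where y0: "y0 \<in> interior Y" using hY by blast
    then obtain r' where r': "r' > 0" "ball y0 r' \<subseteq> Y" by (meson mem_interior)
    obtain e' :: 'b where e': "e' \<in> Basis" using nonempty_Basis by blast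
    have "dist y0 (y0 + (r'/2) *\<^sub>R e') < r'" using r' e' by (simp add: dist_norm)
    then have yy: "y0 + (r'/2) *\<^sub>R e' \<in> Y" "y0 \<in> Y" using r' by auto
    have "ereal (norm (gf x (y0 + (r'/2) *\<^sub>R e') - gf x y0)) \<le> lam * ereal (norm (x - x)) + ereal (\<mu> * norm ((y0 + (r'/2) *\<^sub>R e') - y0))"
      using k0 x yy by blast
    then have "0 \<le> \<mu> * (r' / 2)" using r' e'
      by (simp add: zero_ereal_def[symmetric]) (metis mult_nonneg_nonneg norm_ge_zero order_trans zero_le_numeral)
    then have mu: "0 \<le> \<mu>" using r' by (simp add: zero_le_mult_iff)
    have "\<mu> * norm (y - yh) \<le> \<mu> * DD" by (rule mult_left_mono[OF ndiam mu])
    with nmu have A: "norm (G1 - G2) \<le> \<mu> * DD" by linarith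
    have B: "norm (G1 - G2) \<le> 2 * \<sigma>" using nG True by (simp add: L_def)
    show ?thesis using A B True by simp
  qed
qed

end
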